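(* Let $A_1$ and $A_2$ be finite alphabets, each with at least two symbols, and give $A_1^*$ and $A_2^*$ their standard self-similar structures. Then a homeomorphism $f\colon A_1^\omega\to A_2^\omega$ is rational in the self-similar-tree sense if and only if it is computed by a nondegenerate asynchronous transducer with input alphabet $A_1$ and output alphabet $A_2$.
   Context: For a finite alphabet $A$, $A^*$ is the rooted tree of finite words, rooted at the empty word, with an edge from $w$ to $wa$ for each $a\in A$; its boundary is identified with $A^\omega$. Its standard self-similar structure has a single vertex type, and for words $\alpha,\beta$ exactly one morphism $A^*_\alpha\to A^*_\beta$, namely the prefix replacement $\alpha\gamma\mapsto\beta\gamma$; here $A^*_\alpha$ is the subtree of words with prefix $\alpha$. For self-similar trees $T,T'$, a homeomorphism $f\colon\partial T\to\partial T'$ has equivalent restrictions at same-type vertices $v,w$ of $T$ if there exist same-type vertices $x,y$ of $T'$ and morphisms $\varphi\colon T_v\to T_w$, $\psi\colon T'_x\to T'_y$ such that $f(\partial T_v)\subseteq\partial T'_x$, $f(\partial T_w)\subseteq\partial T'_y$ and $f\circ\varphi_*=\psi_*\circ f$ on $\partial T_v$, where $\varphi_*,\psi_*$ are the induced boundary homeomorphisms. $f$ is rational in the self-similar-tree sense if this equivalence relation on the vertices of $T$ has finitely many classes. A transducer with input alphabet $A_1$ and output alphabet $A_2$ has finitely many states, an initial state, a transition function $Q\times A_1\to Q$ and an output function $Q\times A_1\to A_2^*$ (finite, possibly empty, words). It is nondegenerate if the concatenated output on every infinite input is infinite. *)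

theory Defs
  imports "HOL-Analysis.Analysis" "HOL-Library.Omega_Words_Fun"
begin

definition cantor_top :: "('a word) topology" where
  "cantor_top = product_topology (\<lambda>_::nat. discrete_topology (UNIV :: 'a set)) UNIV"

text \<open>Boundary of the subtree of words with prefix v: the cylinder of v.\<close>
definition cyl :: "'a list \<Rightarrow> 'a word set" where
  "cyl v = range (\<lambda>\<xi>. v \<frown> \<xi>)"

text \<open>Equivalent restrictions of f at vertices v, w of A1^* (standard self-similar
  structure: one vertex type, unique morphism = prefix replacement).  The induced
  boundary maps are phi_*(v xi) = w xi and psi_*(x eta) = y eta.\<close>
definition equiv_restr :: "('a word \<Rightarrow> 'b word) \<Rightarrow> 'a list \<Rightarrow> 'a list \<Rightarrow> bool" where
  "equiv_restr f v w \<longleftrightarrow> (\<exists>x y. f ` cyl v \<subseteq> cyl x \<and> f ` cyl w \<subseteq> cyl y \<and>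
     (\<forall>\<xi> \<eta>. f (v \<frown> \<xi>) = x \<frown> \<eta> \<longrightarrow> f (w \<frown> \<xi>) = y \<frown> \<eta>))"

definition ss_rational :: "('a word \<Rightarrow> 'b word) \<Rightarrow> bool" where
  "ss_rational f \<longleftrightarrow> finite (UNIV // {(v, w). equiv_restr f v w})"

definition is_transducer ::
  "nat set \<Rightarrow> nat \<Rightarrow> (nat \<Rightarrow> 'a \<Rightarrow> nat) \<Rightarrow> (nat \<Rightarrow> 'a \<Rightarrow> 'b list) \<Rightarrow> bool" where
  "is_transducer Q q0 \<delta> lam \<longleftrightarrow> finite Q \<and> q0 \<in> Q \<and> (\<forall>q\<in>Q. \<forall>a. \<delta> q a \<in> Q)"

fun trun :: "nat \<Rightarrow> (nat \<Rightarrow> 'a \<Rightarrow> nat) \<Rightarrow> 'a word \<Rightarrow> nat \<Rightarrow> nat" where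
  "trun q0 \<delta> \<xi> 0 = q0"
| "trun q0 \<delta> \<xi> (Suc n) = \<delta> (trun q0 \<delta> \<xi> n) (\<xi> n)"

definition tout :: "nat \<Rightarrow> (nat \<Rightarrow> 'a \<Rightarrow> nat) \<Rightarrow> (nat \<Rightarrow> 'a \<Rightarrow> 'b list) \<Rightarrow> 'a word \<Rightarrow> nat \<Rightarrow> 'b list" where
  "tout q0 \<delta> lam \<xi> n = concat (map (\<lambda>i. lam (trun q0 \<delta> \<xi> i) (\<xi> i)) [0..<n])"

definition nondegenerate ::
  "nat \<Rightarrow> (nat \<Rightarrow> 'a \<Rightarrow> nat) \<Rightarrow> (nat \<Rightarrow> 'a \<Rightarrow> 'b list) \<Rightarrow> bool" where
  "nondegenerate q0 \<delta> lam \<longleftrightarrow> (\<forall>\<xi>::'a word. \<forall>m. \<exists>n. m \<le> length (tout q0 \<delta> lam \<xi> n))"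

definition computes ::
  "nat \<Rightarrow> (nat \<Rightarrow> 'a \<Rightarrow> nat) \<Rightarrow> (nat \<Rightarrow> 'a \<Rightarrow> 'b list) \<Rightarrow> ('a word \<Rightarrow> 'b word) \<Rightarrow> bool" where
  "computes q0 \<delta> lam f \<longleftrightarrow>
     (\<forall>\<xi> n. tout q0 \<delta> lam \<xi> n = prefix (length (tout q0 \<delta> lam \<xi> n)) (f \<xi>))"

end

theory Submission
  imports Defs
begin

lemma prefix_nth': "i < n \<Longrightarrow> prefix n w ! i = w i"
  by (simp add: subsequence_def)

lemma prefix_eq_iff: "prefix n u = prefix n w \<longleftrightarrow> (\<forall>i<n. u i = w i)"
  by (auto simp: subsequence_def)

lemma prefix_add: "prefix (a + b) w = prefix a w @ prefix b (suffix a w)"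
  by (metis subsequence_append subsequence_prefix_suffix add_diff_cancel_left')

lemma cyl_iff: "u \<in> cyl x \<longleftrightarrow> prefix (length x) u = x"
proof
  assume "u \<in> cyl x" then show "prefix (length x) u = x" by (auto simp: cyl_def)
next
  assume "prefix (length x) u = x"
  then have "u = x \<frown> suffix (length x) u" by (metis prefix_suffix)
  then show "u \<in> cyl x" unfolding cyl_def by blast
qed

definition good :: "('a word \<Rightarrow> 'b word) \<Rightarrow> bool" where
  "good h \<longleftrightarrow> (\<exists>z1 z2. h z1 \<noteq> h z2)"

definition cpl :: "('a word \<Rightarrow> 'b word) \<Rightarrow> nat" where
  "cpl h = (GREATEST k. \<forall>z. prefix k (h z) = prefix k (h undefined))"

definition Nrm :: "('a word \<Rightarrow> 'b word) \<Rightarrow> ('a word \<Rightarrow> 'b word)" where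
  "Nrm h = (\<lambda>z. suffix (cpl h) (h z))"

lemma cpl_bound:
  assumes "good h" "\<forall>z. prefix k (h z) = prefix k (h c)"
  shows "\<exists>B. \<forall>k. (\<forall>z. prefix k (h z) = prefix k (h c)) \<longrightarrow> k \<le> B"
proof -
  obtain z1 z2 where "h z1 \<noteq> h z2" using assms(1) by (auto simp: good_def)
  then obtain j where j: "h z1 j \<noteq> h z2 j" by auto
  have "k \<le> j" if "\<forall>z. prefix k (h z) = prefix k (h c)" for k
  proof (rule ccontr)
    assume "\<not> k \<le> j"
    then have "prefix k (h z1) = prefix k (h z2)" using that by metis
    then show False using j \<open>\<not> k \<le> j\<close> by (simp add: prefix_eq_iff)
  qed
  then show ?thesis by blast
qed

lemma cpl_prop:
  assumes "good h"
  shows "prefix (cpl h) (h z) = prefix (cpl h) (h undefined)"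
proof -
  let ?P = "\<lambda>k. \<forall>z. prefix k (h z) = prefix k (h undefined)"
  have p0: "?P 0" by simp
  obtain B where B: "\<forall>k. ?P k \<longrightarrow> k \<le> B" using cpl_bound[OF assms p0] by blast
  have "?P (Greatest ?P)" by (rule GreatestI_nat[where P="?P", OF p0]) (use B in blast)
  then show ?thesis unfolding cpl_def by blast
qed

lemma cpl_max:
  assumes "good h" "\<forall>z. prefix k (h z) = prefix k (h z0)"
  shows "k \<le> cpl h"
proof -
  let ?P = "\<lambda>k. \<forall>z. prefix k (h z) = prefix k (h undefined)"
  have p0: "?P 0" by simp
  obtain B where B: "\<forall>k. ?P k \<longrightarrow> k \<le> B" using cpl_bound[OF assms(1) p0] by blast
  have "?P k" using assms(2) by metis
  then have "k \<le> Greatest ?P" by (rule Greatest_le_nat[where P="?P"]) (use B in blast)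
  then show ?thesis unfolding cpl_def by blast
qed

lemma decomp:
  assumes "good h"
  shows "h z = prefix (cpl h) (h undefined) \<frown> Nrm h z"
  unfolding Nrm_def by (metis cpl_prop[OF assms] prefix_suffix)

lemma good_conc: "good (\<lambda>z. x \<frown> G z) \<longleftrightarrow> good G"
  by (auto simp: good_def)

lemma cpl_conc:
  assumes "good G"
  shows "cpl (\<lambda>z. x \<frown> G z) = length x + cpl G"
proof -
  have g: "good (\<lambda>z. x \<frown> G z)" using assms good_conc by blast
  have "\<forall>z. prefix (length x + cpl G) (x \<frown> G z) = prefix (length x + cpl G) (x \<frown> G undefined)"
  proof
    fix z show "prefix (length x + cpl G) (x \<frown> G z) = prefix (length x + cpl G) (x \<frown> G undefined)"
      using cpl_prop[OF assms, of z] by simp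
  qed
  from cpl_max[OF g this] have ge: "length x + cpl G \<le> cpl (\<lambda>z. x \<frown> G z)" .
  define K where "K = cpl (\<lambda>z. x \<frown> G z)"
  have "\<forall>z. prefix K (x \<frown> G z) = prefix K (x \<frown> G undefined)"
  proof
    fix z show "prefix K (x \<frown> G z) = prefix K (x \<frown> G undefined)"
      using cpl_prop[OF g, of z] unfolding K_def by simp
  qed
  note kk = this
  have "\<forall>z. prefix (K - length x) (G z) = prefix (K - length x) (G undefined)"
  proof
    fix z show "prefix (K - length x) (G z) = prefix (K - length x) (G undefined)"
      using ge kk[rule_format, of z] unfolding K_def[symmetric] by simp
  qed
  then have "K - length x \<le> cpl G" by (rule cpl_max[OF assms])
  then show ?thesis using ge unfolding K_def by simp
qed

lemma Nrm_conc:
  assumes "good G"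
  shows "Nrm (\<lambda>z. x \<frown> G z) = Nrm G"
  unfolding Nrm_def cpl_conc[OF assms] by simp

lemma good_Nrm: "good h \<Longrightarrow> good (Nrm h)"
  by (metis decomp good_def)

lemma cpl_Nrm:
  assumes "good h"
  shows "cpl (Nrm h) = 0"
proof -
  define k where "k = cpl (Nrm h)"
  have "\<forall>z. prefix k (Nrm h z) = prefix k (Nrm h undefined)"
    using cpl_prop[OF good_Nrm[OF assms]] unfolding k_def by blast
  note kk = this
  have "\<forall>z. prefix (cpl h + k) (h z) = prefix (cpl h + k) (h undefined)"
  proof
    fix z
    have "prefix (cpl h + k) (h z) = prefix (cpl h) (h z) @ prefix k (Nrm h z)"
      by (simp add: prefix_add Nrm_def)
    also have "\<dots> = prefix (cpl h) (h undefined) @ prefix k (Nrm h undefined)"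
      using cpl_prop[OF assms, of z] kk[rule_format, of z] by simp
    also have "\<dots> = prefix (cpl h + k) (h undefined)"
      by (simp add: prefix_add Nrm_def)
    finally show "prefix (cpl h + k) (h z) = prefix (cpl h + k) (h undefined)" .
  qed
  then have "cpl h + k \<le> cpl h" by (rule cpl_max[OF assms])
  then show ?thesis unfolding k_def by simp
qed


lemma trun_add: "trun q \<delta> \<xi> (k + n) = trun (trun q \<delta> \<xi> k) \<delta> (suffix k \<xi>) n"
  by (induction n) auto

lemma tout_Suc: "tout q \<delta> lam \<xi> (Suc n) = tout q \<delta> lam \<xi> n @ lam (trun q \<delta> \<xi> n) (\<xi> n)"
  by (simp add: tout_def)

lemma tout_add: "tout q \<delta> lam \<xi> (k + n) = tout q \<delta> lam \<xi> k @ tout (trun q \<delta> \<xi> k) \<delta> lam (suffix k \<xi>) n"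
proof (induction n)
  case 0
  then show ?case by (simp add: tout_def)
next
  case (Suc n)
  have "tout q \<delta> lam \<xi> (k + Suc n) = tout q \<delta> lam \<xi> (k + n) @ lam (trun q \<delta> \<xi> (k+n)) (\<xi> (k+n))"
    using tout_Suc[of q \<delta> lam \<xi> "k+n"] by simp
  also have "\<dots> = tout q \<delta> lam \<xi> k @ tout (trun q \<delta> \<xi> k) \<delta> lam (suffix k \<xi>) (Suc n)"
    using Suc by (simp add: tout_Suc trun_add suffix_def)
  finally show ?case .
qed

lemma trun_cong: "(\<forall>i<n. \<xi> i = \<zeta> i) \<Longrightarrow> trun q \<delta> \<xi> n = trun q \<delta> \<zeta> n"
  by (induction n) auto

lemma tout_cong: "(\<forall>i<n. \<xi> i = \<zeta> i) \<Longrightarrow> tout q \<delta> lam \<xi> n = tout q \<delta> lam \<zeta> n"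
proof (induction n)
  case 0
  then show ?case by (simp add: tout_def)
next
  case (Suc n)
  then show ?case using trun_cong[of n \<xi> \<zeta>] by (simp add: tout_Suc)
qed

lemma trun_in: "is_transducer Q q0 \<delta> lam \<Longrightarrow> trun q0 \<delta> \<xi> n \<in> Q"
  by (induction n) (auto simp: is_transducer_def)

lemma er_refl: "equiv_restr f v v"
  unfolding equiv_restr_def
  by (rule exI[of _ "[]"], rule exI[of _ "[]"]) (auto simp: cyl_def)

lemma er_sym: "equiv_restr f v w \<Longrightarrow> equiv_restr f w v"
proof -
  assume "equiv_restr f v w"
  then obtain x y where c1: "f ` cyl v \<subseteq> cyl x" and c2: "f ` cyl w \<subseteq> cyl y"
    and c3: "\<forall>\<xi> \<eta>. f (v \<frown> \<xi>) = x \<frown> \<eta> \<longrightarrow> f (w \<frown> \<xi>) = y \<frown> \<eta>"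
    unfolding equiv_restr_def by blast
  have "f (v \<frown> \<xi>) = x \<frown> \<eta>" if "f (w \<frown> \<xi>) = y \<frown> \<eta>" for \<xi> \<eta>
  proof -
    have "f (v \<frown> \<xi>) \<in> cyl x" using c1 by (auto simp: cyl_def)
    then obtain \<eta>' where e: "f (v \<frown> \<xi>) = x \<frown> \<eta>'" by (auto simp: cyl_def)
    then have "f (w \<frown> \<xi>) = y \<frown> \<eta>'" using c3 by blast
    then have "\<eta>' = \<eta>" using that by simp
    then show ?thesis using e by simp
  qed
  then show ?thesis unfolding equiv_restr_def using c1 c2 by blast
qed

lemma cyl_prefix_ext:
  assumes "u \<in> cyl a" "u \<in> cyl b" "length b \<le> length a"
  shows "a = b @ drop (length b) a"
proof -
  have "take (length b) a = take (length b) (prefix (length a) u)"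
    using assms(1) by (simp add: cyl_iff)
  also have "\<dots> = prefix (length b) u" using assms(3)
    by (simp add: subsequence_def take_map min_def)
  also have "\<dots> = b" using assms(2) by (simp add: cyl_iff)
  finally show ?thesis by (metis append_take_drop_id)
qed

lemma cyl_conc_ex: "u \<in> cyl x \<Longrightarrow> \<exists>\<eta>. u = x \<frown> \<eta>"
  by (auto simp: cyl_def)

lemma conc_in_cyl: "x \<frown> \<eta> \<in> cyl x"
  by (auto simp: cyl_def)

lemma er_trans: "equiv_restr f v w \<Longrightarrow> equiv_restr f w u \<Longrightarrow> equiv_restr f v u"
proof -
  assume a1: "equiv_restr f v w" and a2: "equiv_restr f w u"
  obtain x y where c1: "f ` cyl v \<subseteq> cyl x" and c2: "f ` cyl w \<subseteq> cyl y"
    and c3: "\<forall>\<xi> \<eta>. f (v \<frown> \<xi>) = x \<frown> \<eta> \<longrightarrow> f (w \<frown> \<xi>) = y \<frown> \<eta>"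
    using a1 unfolding equiv_restr_def by blast
  obtain x' y' where d1: "f ` cyl w \<subseteq> cyl x'" and d2: "f ` cyl u \<subseteq> cyl y'"
    and d3: "\<forall>\<xi> \<eta>. f (w \<frown> \<xi>) = x' \<frown> \<eta> \<longrightarrow> f (u \<frown> \<xi>) = y' \<frown> \<eta>"
    using a2 unfolding equiv_restr_def by blast
  have fv: "\<And>\<xi>. f (v \<frown> \<xi>) \<in> cyl x" using c1 conc_in_cyl[of v] by blast
  have fw: "\<And>\<xi>. f (w \<frown> \<xi>) \<in> cyl y" using c2 conc_in_cyl[of w] by blast
  have fw': "\<And>\<xi>. f (w \<frown> \<xi>) \<in> cyl x'" using d1 conc_in_cyl[of w] by blast
  show ?thesis
  proof (cases "length x' \<le> length y")
    case True
    define z where "z = drop (length x') y"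
    have yz: "y = x' @ z" unfolding z_def using cyl_prefix_ext[OF fw fw' True] .
    have imp: "f (u \<frown> \<xi>) = (y' @ z) \<frown> \<eta>" if "f (v \<frown> \<xi>) = x \<frown> \<eta>" for \<xi> \<eta>
    proof -
      have "f (w \<frown> \<xi>) = y \<frown> \<eta>" using c3 that by blast
      then have "f (w \<frown> \<xi>) = x' \<frown> (z \<frown> \<eta>)" using yz by simp
      then have "f (u \<frown> \<xi>) = y' \<frown> (z \<frown> \<eta>)" using d3 by blast
      then show ?thesis by simp
    qed
    have "f ` cyl u \<subseteq> cyl (y' @ z)"
    proof
      fix t assume "t \<in> f ` cyl u"
      then obtain \<xi> where t: "t = f (u \<frown> \<xi>)" by (auto simp: cyl_def)
      obtain \<eta> where "f (v \<frown> \<xi>) = x \<frown> \<eta>" using cyl_conc_ex[OF fv] by blast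
      then have "f (u \<frown> \<xi>) = (y' @ z) \<frown> \<eta>" by (rule imp)
      then show "t \<in> cyl (y' @ z)" using t conc_in_cyl[of "y' @ z" \<eta>] by simp
    qed
    then have "f ` cyl v \<subseteq> cyl x \<and> f ` cyl u \<subseteq> cyl (y' @ z) \<and>
     (\<forall>\<xi> \<eta>. f (v \<frown> \<xi>) = x \<frown> \<eta> \<longrightarrow> f (u \<frown> \<xi>) = (y' @ z) \<frown> \<eta>)"
      using c1 imp by blast
    then show ?thesis unfolding equiv_restr_def by blast
  next
    case False
    then have le: "length y \<le> length x'" by simp
    define z where "z = drop (length y) x'"
    have xz: "x' = y @ z" unfolding z_def using cyl_prefix_ext[OF fw' fw le] .
    have "f ` cyl v \<subseteq> cyl (x @ z)"
    proof
      fix t assume "t \<in> f ` cyl v"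
      then obtain \<xi> where t: "t = f (v \<frown> \<xi>)" by (auto simp: cyl_def)
      obtain \<eta> where e: "f (v \<frown> \<xi>) = x \<frown> \<eta>" using cyl_conc_ex[OF fv] by blast
      then have "f (w \<frown> \<xi>) = y \<frown> \<eta>" using c3 by blast
      moreover obtain \<eta>'' where "f (w \<frown> \<xi>) = x' \<frown> \<eta>''" using cyl_conc_ex[OF fw'] by blast
      ultimately have "y \<frown> \<eta> = y \<frown> (z \<frown> \<eta>'')" using xz by simp
      then have "\<eta> = z \<frown> \<eta>''" by (metis conc_conc same_concat_eq)
      then show "t \<in> cyl (x @ z)" using e t conc_in_cyl[of "x @ z" "\<eta>''"] by simp
    qed
    moreover have "f (u \<frown> \<xi>) = y' \<frown> \<eta>" if "f (v \<frown> \<xi>) = (x @ z) \<frown> \<eta>" for \<xi> \<eta>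
    proof -
      have "f (v \<frown> \<xi>) = x \<frown> (z \<frown> \<eta>)" using that by simp
      then have "f (w \<frown> \<xi>) = y \<frown> (z \<frown> \<eta>)" using c3 by blast
      then have "f (w \<frown> \<xi>) = x' \<frown> \<eta>" using xz by simp
      then show ?thesis using d3 by blast
    qed
    ultimately have "f ` cyl v \<subseteq> cyl (x @ z) \<and> f ` cyl u \<subseteq> cyl y' \<and>
     (\<forall>\<xi> \<eta>. f (v \<frown> \<xi>) = (x @ z) \<frown> \<eta> \<longrightarrow> f (u \<frown> \<xi>) = y' \<frown> \<eta>)"
      using d2 by blast
    then show ?thesis unfolding equiv_restr_def by blast
  qed
qed

lemma er_equiv: "equiv UNIV {(v, w). equiv_restr f v w}"
  unfolding equiv_def refl_on_def sym_def trans_def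
  using er_refl er_sym er_trans by blast

lemma finite_quot:
  assumes eq: "equiv UNIV r" and fQ: "finite Q" and sQ: "\<And>v. s v \<in> Q"
    and sr: "\<And>v w. s v = s w \<Longrightarrow> (v, w) \<in> r"
  shows "finite (UNIV // r)"
proof -
  have "UNIV // r \<subseteq> (\<lambda>q. r `` {SOME v. s v = q}) ` Q"
  proof
    fix C assume "C \<in> UNIV // r"
    then obtain v where C: "C = r `` {v}" by (auto simp: quotient_def)
    define u where "u = (SOME u. s u = s v)"
    have "s u = s v" unfolding u_def by (rule someI_ex) blast
    then have "(v, u) \<in> r" using sr by metis
    then have "r `` {v} = r `` {u}" using equiv_class_eq[OF eq] by blast
    then show "C \<in> (\<lambda>q. r `` {SOME v. s v = q}) ` Q" using C sQ u_def by blast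
  qed
  then show ?thesis using fQ finite_subset by blast
qed


lemma conc_prefix_agree: "\<forall>i<length v. (v \<frown> \<xi>) i = (v \<frown> \<zeta>) i"
  by simp

lemma trans_imp_rational:
  fixes f :: "'a word \<Rightarrow> 'b word"
  assumes T: "is_transducer Q q0 \<delta> lam" and ND: "nondegenerate q0 \<delta> lam" and C: "computes q0 \<delta> lam f"
  shows "ss_rational f"
proof -
  define qv where "qv v = trun q0 \<delta> (v \<frown> undefined) (length v)" for v :: "'a list"
  define ov where "ov v = tout q0 \<delta> lam (v \<frown> undefined) (length v)" for v :: "'a list"
  have qv: "trun q0 \<delta> (v \<frown> \<xi>) (length v) = qv v" for v \<xi>
    unfolding qv_def by (rule trun_cong) simp
  have ov: "tout q0 \<delta> lam (v \<frown> \<xi>) (length v) = ov v" for v \<xi>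
    unfolding ov_def by (rule tout_cong) simp
  have Cx: "tout q0 \<delta> lam \<xi> n = prefix (length (tout q0 \<delta> lam \<xi> n)) (f \<xi>)" for \<xi> n
    using C unfolding computes_def by blast
  have P: "prefix (length (ov v)) (f (v \<frown> \<xi>)) = ov v" for v \<xi>
    using Cx[of "v \<frown> \<xi>" "length v"] ov[of v \<xi>] by simp
  have split: "tout q0 \<delta> lam (v \<frown> \<xi>) (length v + N) = ov v @ tout (qv v) \<delta> lam \<xi> N" for v \<xi> N
    using tout_add[of q0 \<delta> lam "v \<frown> \<xi>" "length v" N] qv ov by simp
  have nthT: "f (v \<frown> \<xi>) (length (ov v) + i) = tout (qv v) \<delta> lam \<xi> N ! i"
    if "i < length (tout (qv v) \<delta> lam \<xi> N)" for v \<xi> N i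
  proof -
    let ?T = "tout (qv v) \<delta> lam \<xi> N"
    have "ov v @ ?T = prefix (length (ov v @ ?T)) (f (v \<frown> \<xi>))"
      using Cx[of "v \<frown> \<xi>" "length v + N"] split[of v \<xi> N] by simp
    then have "(ov v @ ?T) ! (length (ov v) + i) = prefix (length (ov v @ ?T)) (f (v \<frown> \<xi>)) ! (length (ov v) + i)"
      by simp
    then show ?thesis using that by (simp add: prefix_nth' nth_append)
  qed
  have key: "suffix (length (ov v)) (f (v \<frown> \<xi>)) = suffix (length (ov w)) (f (w \<frown> \<xi>))"
    if "qv v = qv w" for v w \<xi>
  proof
    fix i
    obtain N where N: "length (ov v) + Suc i \<le> length (tout q0 \<delta> lam (v \<frown> \<xi>) N)"
      using ND unfolding nondegenerate_def by blast
    have "length (tout q0 \<delta> lam (v \<frown> \<xi>) N) \<le> length (tout q0 \<delta> lam (v \<frown> \<xi>) (N + length v))"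
      using tout_add[of q0 \<delta> lam "v \<frown> \<xi>" N "length v"] by simp
    also have "\<dots> = length (ov v) + length (tout (qv v) \<delta> lam \<xi> N)"
      using split[of v \<xi> N] by (simp add: add.commute)
    finally have iN: "i < length (tout (qv v) \<delta> lam \<xi> N)" using N by simp
    have "suffix (length (ov v)) (f (v \<frown> \<xi>)) i = tout (qv v) \<delta> lam \<xi> N ! i"
      using nthT[OF iN] by simp
    moreover have "suffix (length (ov w)) (f (w \<frown> \<xi>)) i = tout (qv v) \<delta> lam \<xi> N ! i"
      using nthT[of i w \<xi> N] iN that by simp
    ultimately show "suffix (length (ov v)) (f (v \<frown> \<xi>)) i = suffix (length (ov w)) (f (w \<frown> \<xi>)) i"
      by simp
  qed
  have er: "equiv_restr f v w" if "qv v = qv w" for v w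
  proof -
    have c1: "f ` cyl v \<subseteq> cyl (ov v)" for v
    proof
      fix t assume "t \<in> f ` cyl v"
      then obtain \<xi> where t: "t = f (v \<frown> \<xi>)" by (auto simp: cyl_def)
      show "t \<in> cyl (ov v)" unfolding cyl_iff t by (rule P)
    qed
    have "f (w \<frown> \<xi>) = ov w \<frown> \<eta>" if "f (v \<frown> \<xi>) = ov v \<frown> \<eta>" for \<xi> \<eta>
    proof -
      have "\<eta> = suffix (length (ov v)) (f (v \<frown> \<xi>))" using that by simp
      also have "\<dots> = suffix (length (ov w)) (f (w \<frown> \<xi>))" using key[OF \<open>qv v = qv w\<close>] .
      finally have "\<eta> = suffix (length (ov w)) (f (w \<frown> \<xi>))" .
      then show ?thesis by (metis prefix_suffix P)
    qed
    then show ?thesis unfolding equiv_restr_def using c1 by blast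
  qed
  have fQ: "finite Q" using T by (simp add: is_transducer_def)
  have qQ: "qv v \<in> Q" for v unfolding qv_def using trun_in[OF T] .
  have "finite (UNIV // {(v, w). equiv_restr f v w})"
    using finite_quot[OF er_equiv fQ, of qv] qQ er by blast
  then show ?thesis unfolding ss_rational_def .
qed


lemma topspace_cantor [simp]: "topspace (cantor_top :: 'a word topology) = UNIV"
  by (simp add: cantor_top_def)

lemma cont_prefix:
  fixes f :: "'a word \<Rightarrow> 'b word"
  assumes "continuous_map cantor_top cantor_top f"
  shows "\<exists>n. \<forall>\<zeta>. (\<forall>i<n. \<zeta> i = \<xi> i) \<longrightarrow> (\<forall>i<m. f \<zeta> i = f \<xi> i)"
proof -
  define S where "S = {\<eta>::'b word. \<forall>i<m. \<eta> i = f \<xi> i}"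
  have "openin (cantor_top :: 'b word topology) S"
    unfolding cantor_top_def openin_product_topology_alt
  proof (intro ballI)
    fix x assume "x \<in> S"
    define U where "U i = (if i < m then {f \<xi> i} else UNIV)" for i
    have "finite {i \<in> UNIV. U i \<noteq> topspace (discrete_topology UNIV)}"
      by (rule finite_subset[of _ "{..<m}"]) (auto simp: U_def)
    moreover have "Pi\<^sub>E UNIV U \<subseteq> S" by (auto simp: S_def U_def PiE_def Pi_def)
    moreover have "x \<in> Pi\<^sub>E UNIV U" using \<open>x \<in> S\<close> by (auto simp: S_def U_def)
    ultimately show "\<exists>U. finite {i \<in> UNIV. U i \<noteq> topspace (discrete_topology UNIV)} \<and>
         (\<forall>i\<in>UNIV. openin (discrete_topology UNIV) (U i)) \<and> x \<in> Pi\<^sub>E UNIV U \<and> Pi\<^sub>E UNIV U \<subseteq> S"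
      by auto
  qed
  then have "openin (cantor_top :: 'a word topology) {x \<in> topspace cantor_top. f x \<in> S}"
    using assms openin_continuous_map_preimage by blast
  then have op: "openin (cantor_top :: 'a word topology) (f -` S)" by (simp add: vimage_def)
  have "\<xi> \<in> f -` S" by (simp add: S_def)
  then obtain U where U: "finite {i \<in> UNIV. U i \<noteq> topspace (discrete_topology (UNIV::'a set))}"
      "\<xi> \<in> Pi\<^sub>E UNIV U" "Pi\<^sub>E UNIV U \<subseteq> f -` S"
    using op unfolding cantor_top_def openin_product_topology_alt by blast
  obtain n where n: "{i. U i \<noteq> UNIV} \<subseteq> {..<n}"
    using U(1) finite_nat_bounded by auto
  have "f \<zeta> \<in> S" if "\<forall>i<n. \<zeta> i = \<xi> i" for \<zeta>
  proof -
    have "\<zeta> \<in> Pi\<^sub>E UNIV U"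
    proof (auto simp: PiE_def Pi_def)
      fix i show "\<zeta> i \<in> U i"
      proof (cases "i < n")
        case True then show ?thesis using that U(2) by auto
      next
        case False then have "U i = UNIV" using n by auto
        then show ?thesis by simp
      qed
    qed
    then show ?thesis using U(3) by auto
  qed
  then show ?thesis unfolding S_def by blast
qed


primrec Sst :: "('a word \<Rightarrow> 'b word) \<Rightarrow> 'a word \<Rightarrow> nat \<Rightarrow> ('a word \<Rightarrow> 'b word)" where
  "Sst f \<xi> 0 = f"
| "Sst f \<xi> (Suc n) = Nrm (\<lambda>z. Sst f \<xi> n (\<xi> n ## z))"

lemma prefix_Suc': "prefix (Suc n) \<xi> = prefix n \<xi> @ [\<xi> n]"
  by simp

lemma conc_snoc: "(v @ [a]) \<frown> z = v \<frown> (a ## z)"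
  by simp

lemma rational_imp_trans:
  fixes f :: "'a word \<Rightarrow> 'b word"
  assumes inj: "inj f" and two: "\<exists>a b::'a. a \<noteq> b"
    and cont: "continuous_map cantor_top cantor_top f" and rat: "ss_rational f"
  shows "\<exists>Q q0 \<delta> lam. is_transducer Q q0 \<delta> lam \<and> nondegenerate q0 \<delta> lam \<and> computes q0 \<delta> lam f"
proof -
  define F where "F v = (\<lambda>z. f (v \<frown> z))" for v
  obtain a0 b0 :: 'a where ab: "a0 \<noteq> b0" using two by blast
  have goodF: "good (F v)" for v
  proof -
    have "(\<lambda>_::nat. a0) \<noteq> (\<lambda>_. b0)" using ab by metis
    then have "v \<frown> (\<lambda>_. a0) \<noteq> v \<frown> (\<lambda>_. b0)" by simp
    then have "f (v \<frown> (\<lambda>_. a0)) \<noteq> f (v \<frown> (\<lambda>_. b0))" using inj by (metis injD)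
    then show ?thesis unfolding good_def F_def by blast
  qed
  define r where "r = {(v, w). equiv_restr f v w}"
  have erN: "Nrm (F v) = Nrm (F w)" if er: "equiv_restr f v w" for v w
  proof -
    obtain x y where c1: "f ` cyl v \<subseteq> cyl x"
      and c3: "\<forall>\<xi> \<eta>. f (v \<frown> \<xi>) = x \<frown> \<eta> \<longrightarrow> f (w \<frown> \<xi>) = y \<frown> \<eta>"
      using er unfolding equiv_restr_def by blast
    define G where "G z = suffix (length x) (f (v \<frown> z))" for z
    have Fv: "F v z = x \<frown> G z" for z
    proof -
      have "f (v \<frown> z) \<in> cyl x" using c1 conc_in_cyl[of v z] by blast
      then have "prefix (length x) (f (v \<frown> z)) = x" by (simp add: cyl_iff)
      then show ?thesis unfolding F_def G_def by (metis prefix_suffix)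
    qed
    have Fw: "F w z = y \<frown> G z" for z
      using c3 Fv unfolding F_def by blast
    have "F v = (\<lambda>z. x \<frown> G z)" using Fv by blast
    then have gG: "good G" using goodF[of v] good_conc by metis
    have "Nrm (F v) = Nrm G" using Nrm_conc[OF gG, of x] Fv by (metis ext)
    moreover have "Nrm (F w) = Nrm G" using Nrm_conc[OF gG, of y] Fw by (metis ext)
    ultimately show ?thesis by simp
  qed
  define \<Phi> where "\<Phi> = range (\<lambda>v. Nrm (F v))"
  have fin\<Phi>: "finite \<Phi>"
  proof -
    have "\<Phi> \<subseteq> (\<lambda>C. Nrm (F (SOME v. v \<in> C))) ` (UNIV // r)"
    proof
      fix h assume "h \<in> \<Phi>"
      then obtain v where h: "h = Nrm (F v)" unfolding \<Phi>_def by blast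
      define C where "C = r `` {v}"
      have C: "C \<in> UNIV // r" unfolding C_def quotient_def by blast
      have "v \<in> C" unfolding C_def r_def using er_refl by blast
      then have "(SOME v. v \<in> C) \<in> C" by (rule someI)
      then have "equiv_restr f v (SOME v. v \<in> C)" unfolding C_def r_def by blast
      then have "h = Nrm (F (SOME v. v \<in> C))" using erN h by metis
      then show "h \<in> (\<lambda>C. Nrm (F (SOME v. v \<in> C))) ` (UNIV // r)" using C by blast
    qed
    moreover have "finite (UNIV // r)" using rat unfolding ss_rational_def r_def .
    ultimately show ?thesis using finite_subset by blast
  qed
  define \<Psi> where "\<Psi> = insert f \<Phi>"
  have fin\<Psi>: "finite \<Psi>" using fin\<Phi> unfolding \<Psi>_def by simp
  obtain code :: "('a word \<Rightarrow> 'b word) \<Rightarrow> nat" and N where "code ` \<Psi> = {i. i < N}" and injc: "inj_on code \<Psi>"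
    using finite_imp_inj_to_nat_seg[OF fin\<Psi>] by blast
  define dec where "dec = inv_into \<Psi> code"
  have dec: "dec (code h) = h" if "h \<in> \<Psi>" for h
    unfolding dec_def using injc that by (rule inv_into_f_f)
  define \<delta> where "\<delta> q a = code (Nrm (\<lambda>z. dec q (a ## z)))" for q a
  define lam where "lam q a = prefix (cpl (\<lambda>z. dec q (a ## z))) (dec q (a ## undefined))" for q a
  have step: "good (\<lambda>z. h (a ## z)) \<and> Nrm (\<lambda>z. h (a ## z)) = Nrm (F (v @ [a]))"
    if hyp: "\<forall>z. f (v \<frown> z) = p \<frown> h z" for v p h a
  proof -
    have e: "F (v @ [a]) = (\<lambda>z. p \<frown> h (a ## z))" using hyp unfolding F_def by simp
    then have g: "good (\<lambda>z. h (a ## z))" using goodF[of "v @ [a]"] good_conc by metis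
    show ?thesis using g e Nrm_conc[OF g, of p] by simp
  qed
  have clos: "Nrm (\<lambda>z. h (a ## z)) \<in> \<Phi>" if hP: "h \<in> \<Psi>" for h a
  proof (cases "h = f")
    case True
    have "\<forall>z. f ([] \<frown> z) = [] \<frown> h z" using True by simp
    then show ?thesis using step unfolding \<Phi>_def by blast
  next
    case False
    then obtain v where h: "h = Nrm (F v)" using hP unfolding \<Psi>_def \<Phi>_def by blast
    have "\<forall>z. f (v \<frown> z) = prefix (cpl (F v)) (F v undefined) \<frown> h z"
      using decomp[OF goodF[of v]] h unfolding F_def by metis
    then show ?thesis using step unfolding \<Phi>_def by blast
  qed
  have T: "is_transducer (code ` \<Psi>) (code f) \<delta> lam"
    unfolding is_transducer_def
  proof (intro conjI ballI allI)
    show "finite (code ` \<Psi>)" using fin\<Psi> by simp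
    show "code f \<in> code ` \<Psi>" unfolding \<Psi>_def by simp
  next
    fix q a assume "q \<in> code ` \<Psi>"
    then obtain h where h: "h \<in> \<Psi>" "q = code h" by blast
    have "Nrm (\<lambda>z. h (a ## z)) \<in> \<Psi>" using clos[OF h(1)] unfolding \<Psi>_def by blast
    then show "\<delta> q a \<in> code ` \<Psi>" unfolding \<delta>_def using h dec by simp
  qed
  have inv: "Sst f \<xi> n \<in> \<Psi> \<and> (0 < n \<longrightarrow> Sst f \<xi> n \<in> \<Phi>) \<and>
      (\<forall>z. f (prefix n \<xi> \<frown> z) = tout (code f) \<delta> lam \<xi> n \<frown> Sst f \<xi> n z) \<and>
      trun (code f) \<delta> \<xi> n = code (Sst f \<xi> n)" for \<xi> n
  proof (induction n)
    case 0
    then show ?case by (simp add: \<Psi>_def tout_def subsequence_def)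
  next
    case (Suc n)
    define S where "S = Sst f \<xi> n"
    define t where "t = tout (code f) \<delta> lam \<xi> n"
    define H where "H = (\<lambda>z. S (\<xi> n ## z))"
    have SP: "S \<in> \<Psi>" and eq: "\<forall>z. f (prefix n \<xi> \<frown> z) = t \<frown> S z"
      and tr: "trun (code f) \<delta> \<xi> n = code S"
      using Suc.IH unfolding S_def t_def by auto
    have st: "good H \<and> Nrm H = Nrm (F (prefix n \<xi> @ [\<xi> n]))"
      using step[OF eq] unfolding H_def by blast
    have SS: "Sst f \<xi> (Suc n) = Nrm H" by (simp add: H_def S_def)
    have inP: "Nrm H \<in> \<Phi>" using st unfolding \<Phi>_def by auto
    have tr': "trun (code f) \<delta> \<xi> (Suc n) = code (Nrm H)"
      using tr dec[OF SP] by (simp add: \<delta>_def H_def)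
    have to': "tout (code f) \<delta> lam \<xi> (Suc n) = t @ prefix (cpl H) (H undefined)"
      using tr dec[OF SP] by (simp add: tout_Suc t_def lam_def H_def)
    have fe: "f (prefix (Suc n) \<xi> \<frown> z) = (t @ prefix (cpl H) (H undefined)) \<frown> Nrm H z" for z
    proof -
      have "f (prefix (Suc n) \<xi> \<frown> z) = f (prefix n \<xi> \<frown> (\<xi> n ## z))"
        by (simp only: prefix_Suc' conc_snoc)
      also have "\<dots> = t \<frown> H z" using eq unfolding H_def by simp
      also have "\<dots> = t \<frown> (prefix (cpl H) (H undefined) \<frown> Nrm H z)"
        using decomp[OF conjunct1[OF st], of z] by simp
      finally show ?thesis by simp
    qed
    show ?case using SS inP tr' to' fe unfolding \<Psi>_def by simp
  qed
  have comp: "computes (code f) \<delta> lam f"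
    unfolding computes_def
  proof (intro allI)
    fix \<xi> n
    have "f \<xi> = f (prefix n \<xi> \<frown> suffix n \<xi>)" by (metis prefix_suffix)
    also have "\<dots> = tout (code f) \<delta> lam \<xi> n \<frown> Sst f \<xi> n (suffix n \<xi>)"
      using conjunct1[OF conjunct2[OF conjunct2[OF inv[of \<xi> n]]]] by blast
    finally show "tout (code f) \<delta> lam \<xi> n = prefix (length (tout (code f) \<delta> lam \<xi> n)) (f \<xi>)"
      by simp
  qed
  have nd: "nondegenerate (code f) \<delta> lam"
    unfolding nondegenerate_def
  proof (intro allI)
    fix \<xi> :: "'a word" and m
    obtain n0 where n0: "\<forall>\<zeta>. (\<forall>i<n0. \<zeta> i = \<xi> i) \<longrightarrow> (\<forall>i<m. f \<zeta> i = f \<xi> i)"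
      using cont_prefix[OF cont] by blast
    define t where "t = tout (code f) \<delta> lam \<xi> (Suc n0)"
    define S where "S = Sst f \<xi> (Suc n0)"
    have SP: "S \<in> \<Phi>" and eq: "\<forall>z. f (prefix (Suc n0) \<xi> \<frown> z) = t \<frown> S z"
      using inv[of \<xi> "Suc n0"] unfolding S_def t_def by auto
    obtain v where Sv: "S = Nrm (F v)" using SP unfolding \<Phi>_def by blast
    have gS: "good S" and c0: "cpl S = 0" using Sv good_Nrm[OF goodF] cpl_Nrm[OF goodF] by auto
    have "m \<le> length t"
    proof (rule ccontr)
      assume "\<not> m \<le> length t"
      then have lt: "length t < m" by simp
      have "prefix (m - length t) (S z) = prefix (m - length t) (S undefined)" for z
      proof -
        have agree: "\<forall>i<n0. (prefix (Suc n0) \<xi> \<frown> z) i = \<xi> i" for z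
          by (simp add: prefix_nth')
        have pz: "prefix m (f (prefix (Suc n0) \<xi> \<frown> z)) = prefix m (f \<xi>)" for z
        proof -
          have "\<forall>i<m. f (prefix (Suc n0) \<xi> \<frown> z) i = f \<xi> i"
            using spec[OF n0, of "prefix (Suc n0) \<xi> \<frown> z"] agree[of z] by blast
          then show ?thesis by (simp only: prefix_eq_iff)
        qed
        have "prefix m (t \<frown> S z) = prefix m (f \<xi>)"
          using pz[of z] spec[OF eq, of z] by simp
        moreover have "prefix m (t \<frown> S undefined) = prefix m (f \<xi>)"
          using pz[of undefined] spec[OF eq, of undefined] by simp
        ultimately have "prefix m (t \<frown> S z) = prefix m (t \<frown> S undefined)" by simp
        then show ?thesis using lt by simp
      qed
      then have "m - length t \<le> cpl S" using cpl_max[OF gS] by blast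
      then show False using c0 lt by simp
    qed
    then show "\<exists>n. m \<le> length (tout (code f) \<delta> lam \<xi> n)" unfolding t_def by blast
  qed
  show ?thesis using T nd comp by blast
qed

theorem mainTheorem10:
  fixes f :: "'a::finite word \<Rightarrow> 'b::finite word"
  assumes "CARD('a) \<ge> 2" and "CARD('b) \<ge> 2"
    and "homeomorphic_map (cantor_top :: 'a word topology) (cantor_top :: 'b word topology) f"
  shows "ss_rational f \<longleftrightarrow>
    (\<exists>Q q0 \<delta> lam. is_transducer Q q0 \<delta> lam \<and> nondegenerate q0 \<delta> lam \<and> computes q0 \<delta> lam f)"
proof -
  have inj: "inj f" using homeomorphic_imp_injective_map[OF assms(3)] by simp
  have cont: "continuous_map (cantor_top :: 'a word topology) (cantor_top :: 'b word topology) f"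
    using homeomorphic_imp_continuous_map[OF assms(3)] .
  have two: "\<exists>a b::'a. a \<noteq> b"
  proof (rule ccontr)
    assume "\<not> (\<exists>a b::'a. a \<noteq> b)"
    then have "(UNIV::'a set) = {undefined}" by auto
    then have "CARD('a) = Suc 0" using card_1_singleton_iff by blast
    then show False using assms(1) by simp
  qed
  show ?thesis using trans_imp_rational rational_imp_trans[OF inj two cont] by blast
qed

end
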